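(* Let $H\in(1/2,1)$, $T>0$, and let $\{B^H_t\}_{t\in[0,T]}$ be a fractional Brownian motion with Hurst index $H$, i.e. a continuous centered Gaussian process with $E(B^H_tB^H_s)=\frac12\left(t^{2H}+s^{2H}-|t-s|^{2H}\right)$, adapted to the filtration $\{\mathcal F_t\}_{t\in[0,T]}$ of a stochastic basis satisfying the usual conditions. Then for every sequence $\{\theta_n\}$ of normally condensing partitions of $[0,T]$, \[\sup_{t\in[0,T]}\big|B^H_t-A^{\theta_n}_t\big|\to 0\quad\text{in probability as } n\to\infty,\] where $A^{\theta_n}$ is the predictable compensator of the discretization of $B^H$ on $\theta_n$. That is, $B^H$ coincides with its local predictor along any sequence of normally condensing partitions, in the sense of uniform convergence in probability.
   Context: A stochastic basis $(\Omega,\mathcal F,\{\mathcal F_t\}_{t\in[0,T]},P)$ satisfies the usual conditions: the filtration is right-continuous and $\mathcal F_0$ contains all $P$-null sets of $\mathcal F_T$. For a partition $\theta$: $0=t_0^\theta<t_1^\theta<\dots<t^\theta_{k^\theta}=T$ of $[0,T]$ and an adapted process $X$ with integrable values and càdlàg paths, the predictable compensator of the discretization of $X$ on $\theta$ is the process $A^\theta_t=0$ for $0\le t<t_1^\theta$, $A^\theta_t=\sum_{j=1}^k E\big(X_{t_j^\theta}-X_{t_{j-1}^\theta}\,\big|\,\mathcal F_{t^\theta_{j-1}}\big)$ for $t_k^\theta\le t<t_{k+1}^\theta$ ($k=1,\dots,k^\theta-1$), and $A^\theta_T=\sum_{j=1}^{k^\theta}E\big(X_{t_j^\theta}-X_{t_{j-1}^\theta}\,\big|\,\mathcal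 F_{t^\theta_{j-1}}\big)$. A sequence $\{\theta_n\}$ of partitions of $[0,T]$ is normally condensing if $\theta_n\subset\theta_{n+1}$ and the mesh $|\theta_n|=\max_k(t_k^{\theta_n}-t_{k-1}^{\theta_n})\to0$. An adapted process $X$ with càdlàg paths admits a local predictor $C$ (a process with càdlàg paths) along $\{\theta_n\}$ in the sense of a convergence $\to_\tau$ if $A^{\theta_n}\to_\tau C$. *)

theory Defs
  imports "HOL-Probability.Probability"
begin

definition is_partition :: "real \<Rightarrow> real set \<Rightarrow> bool" where
  "is_partition T \<theta> \<longleftrightarrow> finite \<theta> \<and> \<theta> \<subseteq> {0..T} \<and> 0 \<in> \<theta> \<and> T \<in> \<theta>"

definition next_pt :: "real set \<Rightarrow> real \<Rightarrow> real" where
  "next_pt \<theta> a = Min {b \<in> \<theta>. a < b}"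

definition mesh :: "real set \<Rightarrow> real" where
  "mesh \<theta> = Max ((\<lambda>a. next_pt \<theta> a - a) ` {a \<in> \<theta>. a < Max \<theta>})"

definition normally_condensing :: "real \<Rightarrow> (nat \<Rightarrow> real set) \<Rightarrow> bool" where
  "normally_condensing T \<theta> \<longleftrightarrow> (\<forall>n. is_partition T (\<theta> n) \<and> \<theta> n \<subseteq> \<theta> (Suc n))
      \<and> (\<lambda>n. mesh (\<theta> n)) \<longlonglongrightarrow> 0"

definition compensator ::
  "'a measure \<Rightarrow> (real \<Rightarrow> 'a measure) \<Rightarrow> (real \<Rightarrow> 'a \<Rightarrow> real) \<Rightarrow> real set \<Rightarrow> real \<Rightarrow> 'a \<Rightarrow> real" where
  "compensator M F X \<theta> t \<omega> =
     (\<Sum>a \<in> {a \<in> \<theta>. a < Max \<theta> \<and> next_pt \<theta> a \<le> t}.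
        real_cond_exp M (F a) (\<lambda>\<omega>. X (next_pt \<theta> a) \<omega> - X a \<omega>) \<omega>)"

definition usual_filtration :: "'a measure \<Rightarrow> real \<Rightarrow> (real \<Rightarrow> 'a measure) \<Rightarrow> bool" where
  "usual_filtration M T F \<longleftrightarrow>
     (\<forall>t\<in>{0..T}. subalgebra M (F t)) \<and>
     (\<forall>s t. 0 \<le> s \<longrightarrow> s \<le> t \<longrightarrow> t \<le> T \<longrightarrow> sets (F s) \<subseteq> sets (F t)) \<and>
     (\<forall>t\<in>{0..<T}. sets (F t) = (\<Inter>s\<in>{t<..T}. sets (F s))) \<and>
     (\<forall>A\<in>sets (F T). emeasure M A = 0 \<longrightarrow> A \<in> sets (F 0))"

definition gaussian_rv :: "'a measure \<Rightarrow> ('a \<Rightarrow> real) \<Rightarrow> bool" where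
  "gaussian_rv M X \<longleftrightarrow> X \<in> borel_measurable M \<and>
     ((\<exists>c. AE \<omega> in M. X \<omega> = c) \<or>
      (\<exists>\<mu> \<sigma>. \<sigma> > 0 \<and> distributed M lborel X (normal_density \<mu> \<sigma>)))"

definition is_fBm :: "'a measure \<Rightarrow> real \<Rightarrow> real \<Rightarrow> (real \<Rightarrow> 'a \<Rightarrow> real) \<Rightarrow> bool" where
  "is_fBm M H T B \<longleftrightarrow>
     (\<forall>\<omega>\<in>space M. continuous_on {0..T} (\<lambda>t. B t \<omega>)) \<and>
     (\<forall>I c. finite I \<longrightarrow> I \<subseteq> {0..T} \<longrightarrow> gaussian_rv M (\<lambda>\<omega>. \<Sum>t\<in>I. c t * B t \<omega>)) \<and>
     (\<forall>t\<in>{0..T}. prob_space.expectation M (B t) = 0) \<and>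
     (\<forall>t\<in>{0..T}. \<forall>s\<in>{0..T}. prob_space.expectation M (\<lambda>\<omega>. B t \<omega> * B s \<omega>) =
        (t powr (2*H) + s powr (2*H) - \<bar>t - s\<bar> powr (2*H)) / 2)"

end

theory Submission
  imports Defs
begin


lemma L2_prod_integrable:
  fixes f g :: "'a \<Rightarrow> real"
  assumes [measurable]: "f \<in> borel_measurable M" "g \<in> borel_measurable M"
    and "integrable M (\<lambda>x. (f x)^2)" "integrable M (\<lambda>x. (g x)^2)"
  shows "integrable M (\<lambda>x. f x * g x)"
proof (rule Bochner_Integration.integrable_bound)
  show "integrable M (\<lambda>x. (f x)^2 + (g x)^2)" using assms by auto
  show "(\<lambda>x. f x * g x) \<in> borel_measurable M" by measurable
  show "AE x in M. norm (f x * g x) \<le> norm ((f x)^2 + (g x)^2)"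
  proof (rule AE_I2)
    fix x
    have "2 * \<bar>f x * g x\<bar> \<le> (f x)^2 + (g x)^2"
      using sum_squares_bound[of "\<bar>f x\<bar>" "\<bar>g x\<bar>"] by (simp add: abs_mult power2_abs)
    moreover have "0 \<le> (f x)^2 + (g x)^2" by simp
    ultimately show "norm (f x * g x) \<le> norm ((f x)^2 + (g x)^2)" by simp
  qed
qed

lemma L2_add:
  fixes f g :: "'a \<Rightarrow> real"
  assumes [measurable]: "f \<in> borel_measurable M" "g \<in> borel_measurable M"
    and "integrable M (\<lambda>x. (f x)^2)" "integrable M (\<lambda>x. (g x)^2)"
  shows "integrable M (\<lambda>x. (f x + g x)^2)"
proof -
  have "integrable M (\<lambda>x. (f x)^2 + 2 * (f x * g x) + (g x)^2)"
    using assms L2_prod_integrable[OF assms] by auto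
  then show ?thesis by (simp add: power2_sum algebra_simps)
qed

lemma L2_sum:
  fixes f :: "nat \<Rightarrow> 'a \<Rightarrow> real"
  assumes "\<And>i. i \<in> I \<Longrightarrow> f i \<in> borel_measurable M"
    and "\<And>i. i \<in> I \<Longrightarrow> integrable M (\<lambda>x. (f i x)^2)" and "finite I"
  shows "integrable M (\<lambda>x. (\<Sum>i\<in>I. f i x)^2)"
  using assms(3,1,2)
proof (induction I rule: finite_induct)
  case empty then show ?case by simp
next
  case (insert a I)
  have m: "(\<lambda>x. \<Sum>i\<in>I. f i x) \<in> borel_measurable M"
    using insert by (intro borel_measurable_sum) auto
  show ?case using L2_add[OF insert(4)[of a] m] insert by auto
qed

lemma L2_weight:
  fixes f w :: "'a \<Rightarrow> real"
  assumes [measurable]: "f \<in> borel_measurable M" "w \<in> borel_measurable M"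
    and "integrable M (\<lambda>x. (f x)^2)" and "\<And>x. 0 \<le> w x" "\<And>x. w x \<le> 1"
  shows "integrable M (\<lambda>x. (f x)^2 * w x)"
proof (rule Bochner_Integration.integrable_bound)
  show "integrable M (\<lambda>x. (f x)^2)" by fact
  show "(\<lambda>x. (f x)^2 * w x) \<in> borel_measurable M" by measurable
  show "AE x in M. norm ((f x)^2 * w x) \<le> norm ((f x)^2)"
    using assms(4,5) by (auto intro!: AE_I2 mult_left_le simp: abs_mult)
qed

lemma kolmogorov_ineq:
  fixes D :: "nat \<Rightarrow> 'a \<Rightarrow> real" and G :: "nat \<Rightarrow> 'a measure"
  assumes P: "prob_space M" and eps: "0 < \<epsilon>"
    and Dm: "\<And>j. j < m \<Longrightarrow> D j \<in> borel_measurable M"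
    and D2: "\<And>j. j < m \<Longrightarrow> integrable M (\<lambda>x. (D j x)^2)"
    and DG: "\<And>i j. i < j \<Longrightarrow> j < m \<Longrightarrow> D i \<in> borel_measurable (G j)"
    and sub: "\<And>j. j < m \<Longrightarrow> subalgebra M (G j)"
    and orth: "\<And>j Y. j < m \<Longrightarrow> Y \<in> borel_measurable (G j) \<Longrightarrow> integrable M (\<lambda>x. (Y x)^2)
       \<Longrightarrow> integral\<^sup>L M (\<lambda>x. Y x * D j x) = 0"
  shows "measure M {x\<in>space M. \<exists>k\<le>m. \<epsilon> < \<bar>\<Sum>j<k. D j x\<bar>}
          \<le> (\<Sum>j<m. integral\<^sup>L M (\<lambda>x. (D j x)^2)) / \<epsilon>^2"
proof -
  interpret prob_space M by (rule P)
  define S where "S k x = (\<Sum>j<k. D j x)" for k x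
  have SM[measurable]: "S k \<in> borel_measurable M" if "k \<le> m" for k
    unfolding S_def using that Dm by (intro borel_measurable_sum) auto
  have SG: "S k \<in> borel_measurable (G j)" if "k \<le> j" "j < m" for k j
    unfolding S_def using that DG by (intro borel_measurable_sum) auto
  have S2: "integrable M (\<lambda>x. (S k x)^2)" if "k \<le> m" for k
    unfolding S_def using that Dm D2 by (intro L2_sum) auto
  have step: "integral\<^sup>L M (\<lambda>x. (S (Suc j) x)^2 * w x)
      = integral\<^sup>L M (\<lambda>x. (S j x)^2 * w x) + integral\<^sup>L M (\<lambda>x. (D j x)^2 * w x)"
    if j: "j < m" and wG: "w \<in> borel_measurable (G j)" and w0: "\<And>x. 0 \<le> w x" and w1: "\<And>x. w x \<le> 1"
    for j w
  proof -
    have wM[measurable]: "w \<in> borel_measurable M" using measurable_from_subalg[OF sub[OF j] wG] .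
    have DjM[measurable]: "D j \<in> borel_measurable M" using Dm j by auto
    have SjM[measurable]: "S j \<in> borel_measurable M" using SM j by auto
    have i1: "integrable M (\<lambda>x. (S j x)^2 * w x)" using L2_weight[OF SjM wM S2 w0 w1] j by auto
    have i3: "integrable M (\<lambda>x. (D j x)^2 * w x)" using L2_weight[OF DjM wM D2 w0 w1] j by auto
    have w20: "0 \<le> (w x)^2" for x by simp
    have w21: "(w x)^2 \<le> 1" for x using w0[of x] w1[of x] by (simp add: power_le_one)
    have Y2: "integrable M (\<lambda>x. (S j x * w x)^2)"
      using L2_weight[OF SjM _ S2 w20 w21] j by (simp add: power_mult_distrib)
    have YG: "(\<lambda>x. S j x * w x) \<in> borel_measurable (G j)"
      using SG[of j j] j wG by (intro borel_measurable_times) auto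
    have i2: "integrable M (\<lambda>x. S j x * w x * D j x)"
      by (rule L2_prod_integrable[OF _ DjM Y2 D2[OF j]]) measurable
    have o: "integral\<^sup>L M (\<lambda>x. S j x * w x * D j x) = 0" using orth[OF j YG Y2] .
    have eq: "(S (Suc j) x)^2 * w x = (S j x)^2 * w x + 2 * (S j x * w x * D j x) + (D j x)^2 * w x" for x
      by (simp add: S_def power2_sum algebra_simps)
    have "integral\<^sup>L M (\<lambda>x. (S (Suc j) x)^2 * w x) =
       integral\<^sup>L M (\<lambda>x. (S j x)^2 * w x + 2 * (S j x * w x * D j x) + (D j x)^2 * w x)"
      by (simp only: eq)
    also have "\<dots> = integral\<^sup>L M (\<lambda>x. (S j x)^2 * w x) + 2 * integral\<^sup>L M (\<lambda>x. S j x * w x * D j x)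
        + integral\<^sup>L M (\<lambda>x. (D j x)^2 * w x)"
      using i1 i2 i3 by simp
    finally show ?thesis using o by simp
  qed
  have mono: "integral\<^sup>L M (\<lambda>x. (S k x)^2 * w x) \<le> integral\<^sup>L M (\<lambda>x. (S j x)^2 * w x)"
    if "k \<le> j" "j \<le> m" and wG: "\<And>i. k \<le> i \<Longrightarrow> i < m \<Longrightarrow> w \<in> borel_measurable (G i)"
      and w0: "\<And>x. 0 \<le> w x" and w1: "\<And>x. w x \<le> 1" for k j w
    using that(1,2)
  proof (induction j)
    case 0 then show ?case by simp
  next
    case (Suc j)
    show ?case
    proof (cases "k = Suc j")
      case True then show ?thesis by simp
    next
      case False
      then have kj: "k \<le> j" "j < m" using Suc by auto
      have "0 \<le> integral\<^sup>L M (\<lambda>x. (D j x)^2 * w x)"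
        using w0 by (intro integral_nonneg_AE) auto
      then show ?thesis using Suc.IH kj step[OF kj(2) wG[OF kj] w0 w1] by linarith
    qed
  qed
  have total: "integral\<^sup>L M (\<lambda>x. (S j x)^2) = (\<Sum>i<j. integral\<^sup>L M (\<lambda>x. (D i x)^2))" if "j \<le> m" for j
    using that
  proof (induction j)
    case 0 then show ?case by (simp add: S_def)
  next
    case (Suc j)
    have "integral\<^sup>L M (\<lambda>x. (S (Suc j) x)^2 * 1) = integral\<^sup>L M (\<lambda>x. (S j x)^2 * 1) + integral\<^sup>L M (\<lambda>x. (D j x)^2 * 1)"
      using Suc by (intro step) auto
    then show ?case using Suc by simp
  qed
  define A where "A k = {x\<in>space M. \<epsilon> < \<bar>S k x\<bar> \<and> (\<forall>i<k. \<bar>S i x\<bar> \<le> \<epsilon>)}" for k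
  have AG: "A k \<in> sets (G j)" if "k \<le> j" "j < m" for k j
  proof -
    have sp: "space (G j) = space M" using sub[OF that(2)] unfolding subalgebra_def by auto
    have [measurable]: "S i \<in> borel_measurable (G j)" if "i \<le> k" for i using SG that \<open>k \<le> j\<close> \<open>j < m\<close> by auto
    have "{x\<in>space (G j). \<epsilon> < \<bar>S k x\<bar> \<and> (\<forall>i<k. \<bar>S i x\<bar> \<le> \<epsilon>)} \<in> sets (G j)"
      by measurable
    then show ?thesis unfolding A_def sp .
  qed
  have AM: "A k \<in> sets M" if "k \<le> m" for k
  proof -
    have [measurable]: "S i \<in> borel_measurable M" if "i \<le> k" for i using SM that \<open>k \<le> m\<close> by auto
    show ?thesis unfolding A_def by measurable
  qed
  define Bad where "Bad = {x\<in>space M. \<exists>k\<le>m. \<epsilon> < \<bar>S k x\<bar>}"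
  have BadM: "Bad \<in> sets M"
  proof -
    have [measurable]: "S i \<in> borel_measurable M" if "i \<le> m" for i using SM that by auto
    show ?thesis unfolding Bad_def by measurable
  qed
  have uniq: "k1 = k2" if "x \<in> A k1" "x \<in> A k2" for x k1 k2
  proof (rule ccontr)
    assume ne: "k1 \<noteq> k2"
    have F: False if "a < b" "x \<in> A a" "x \<in> A b" for a b
    proof -
      from that(3) have "\<forall>i<b. \<bar>S i x\<bar> \<le> \<epsilon>" unfolding A_def by simp
      then have "\<bar>S a x\<bar> \<le> \<epsilon>" using that(1) by simp
      moreover from that(2) have "\<epsilon> < \<bar>S a x\<bar>" unfolding A_def by simp
      ultimately show False by simp
    qed
    from ne have "k1 < k2 \<or> k2 < k1" by arith
    then show False using F that by blast
  qed
  have p1: "\<epsilon>^2 * indicator Bad x \<le> (\<Sum>k\<le>m. (S k x)^2 * indicator (A k) x)" for x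
  proof (cases "x \<in> Bad")
    case False then show ?thesis by (auto intro!: sum_nonneg)
  next
    case True
    then obtain k where k: "k \<le> m" "\<epsilon> < \<bar>S k x\<bar>" and xs: "x \<in> space M" unfolding Bad_def by auto
    define k0 where "k0 = (LEAST k. \<epsilon> < \<bar>S k x\<bar>)"
    have k0: "\<epsilon> < \<bar>S k0 x\<bar>" unfolding k0_def by (rule LeastI[of _ k]) (use k in auto)
    have k0m: "k0 \<le> m" using Least_le[of "\<lambda>k. \<epsilon> < \<bar>S k x\<bar>" k] k unfolding k0_def by auto
    have lk: "\<bar>S i x\<bar> \<le> \<epsilon>" if "i < k0" for i
      using not_less_Least[OF that[unfolded k0_def]] by simp
    then have xA: "x \<in> A k0" using k0 xs unfolding A_def by auto
    have "\<epsilon>^2 \<le> \<bar>S k0 x\<bar>^2" by (rule power_mono) (use k0 eps in auto)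
    then have "\<epsilon>^2 \<le> (S k0 x)^2" by simp
    also have "\<dots> = (S k0 x)^2 * indicator (A k0) x" using xA by simp
    also have "\<dots> \<le> (\<Sum>k\<le>m. (S k x)^2 * indicator (A k) x)"
      by (rule member_le_sum) (use k0m in auto)
    finally show ?thesis using True by simp
  qed
  have p2: "(\<Sum>k\<le>m. indicator (A k) x :: real) \<le> 1" for x
  proof (cases "\<exists>k\<le>m. x \<in> A k")
    case False then show ?thesis by simp
  next
    case True
    then obtain k0 where k0: "k0 \<le> m" "x \<in> A k0" by auto
    have z: "(\<Sum>k\<in>{..m}-{k0}. indicator (A k) x :: real) = 0"
    proof (rule sum.neutral, rule ballI)
      fix b assume "b \<in> {..m}-{k0}"
      then have "x \<notin> A b" using uniq[of x b k0] k0(2) by blast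
      then show "(indicator (A b) x :: real) = 0" by simp
    qed
    have "(\<Sum>k\<le>m. indicator (A k) x :: real) = indicator (A k0) x + (\<Sum>k\<in>{..m}-{k0}. indicator (A k) x)"
      by (rule sum.remove) (use k0 in auto)
    then show ?thesis using z by simp
  qed
  have indG: "(\<lambda>x. indicator (A k) x :: real) \<in> borel_measurable (G i)" if "k \<le> i" "i < m" for k i
    using AG[OF that] by simp
  have indM[measurable]: "(\<lambda>x. indicator (A k) x :: real) \<in> borel_measurable M" if "k \<le> m" for k
    using AM[OF that] by simp
  have intk: "integrable M (\<lambda>x. (S k x)^2 * indicator (A k) x)" if "k \<le> m" for k
    using that by (intro L2_weight[OF SM indM S2]) auto
  have intm: "integrable M (\<lambda>x. (S m x)^2 * indicator (A k) x)" if "k \<le> m" for k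
    using that by (intro L2_weight[OF SM indM S2]) auto
  have "\<epsilon>^2 * measure M Bad = integral\<^sup>L M (\<lambda>x. \<epsilon>^2 * indicator Bad x)"
    using BadM by simp
  also have "\<dots> \<le> integral\<^sup>L M (\<lambda>x. (\<Sum>k\<le>m. (S k x)^2 * indicator (A k) x))"
  proof (rule integral_mono)
    show "integrable M (\<lambda>x. \<epsilon>^2 * indicator Bad x)"
      using BadM by (intro integrable_mult_right integrable_real_indicator) (auto simp: emeasure_eq_measure)
    show "integrable M (\<lambda>x. (\<Sum>k\<le>m. (S k x)^2 * indicator (A k) x))"
      using intk by (intro Bochner_Integration.integrable_sum) auto
  qed (rule p1)
  also have "\<dots> = (\<Sum>k\<le>m. integral\<^sup>L M (\<lambda>x. (S k x)^2 * indicator (A k) x))"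
    using intk by (intro Bochner_Integration.integral_sum) auto
  also have "\<dots> \<le> (\<Sum>k\<le>m. integral\<^sup>L M (\<lambda>x. (S m x)^2 * indicator (A k) x))"
    by (intro sum_mono mono) (auto intro: indG)
  also have "\<dots> = integral\<^sup>L M (\<lambda>x. (\<Sum>k\<le>m. (S m x)^2 * indicator (A k) x))"
    using intm by (intro Bochner_Integration.integral_sum[symmetric]) auto
  also have "\<dots> \<le> integral\<^sup>L M (\<lambda>x. (S m x)^2)"
  proof (intro integral_mono)
    show "integrable M (\<lambda>x. (\<Sum>k\<le>m. (S m x)^2 * indicator (A k) x))" using intm by (intro Bochner_Integration.integrable_sum) auto
    show "integrable M (\<lambda>x. (S m x)^2)" using S2 by auto
    fix x
    have "(\<Sum>k\<le>m. (S m x)^2 * indicator (A k) x) = (S m x)^2 * (\<Sum>k\<le>m. indicator (A k) x)"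
      by (simp add: sum_distrib_left)
    also have "\<dots> \<le> (S m x)^2 * 1" using p2[of x] by (intro mult_left_mono) auto
    finally show "(\<Sum>k\<le>m. (S m x)^2 * indicator (A k) x) \<le> (S m x)^2" by simp
  qed
  also have "\<dots> = (\<Sum>j<m. integral\<^sup>L M (\<lambda>x. (D j x)^2))" using total by simp
  finally have "\<epsilon>^2 * measure M Bad \<le> (\<Sum>j<m. integral\<^sup>L M (\<lambda>x. (D j x)^2))" .
  then show ?thesis unfolding Bad_def[symmetric] S_def[symmetric] using eps
    by (simp add: field_simps)
qed




lemma ce_facts:
  fixes X :: "'a \<Rightarrow> real"
  assumes P: "prob_space M" and sub: "subalgebra M F"
    and [measurable]: "X \<in> borel_measurable M" and X2: "integrable M (\<lambda>x. (X x)^2)"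
  shows "integrable M (\<lambda>x. (real_cond_exp M F X x)^2)"
    and "integral\<^sup>L M (\<lambda>x. (real_cond_exp M F X x)^2) \<le> integral\<^sup>L M (\<lambda>x. (X x)^2)"
    and "\<And>Y. Y \<in> borel_measurable F \<Longrightarrow> integrable M (\<lambda>x. (Y x)^2) \<Longrightarrow>
           integral\<^sup>L M (\<lambda>x. Y x * (X x - real_cond_exp M F X x)) = 0"
    and "integrable M (\<lambda>x. (X x - real_cond_exp M F X x)^2)"
    and "integral\<^sup>L M (\<lambda>x. (X x - real_cond_exp M F X x)^2) \<le> 4 * integral\<^sup>L M (\<lambda>x. (X x)^2)"
proof -
  interpret prob_space M by (rule P)
  have "finite_measure_subalgebra M F"
    unfolding finite_measure_subalgebra_def finite_measure_subalgebra_axioms_def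
    using sub finite_measure_axioms by auto
  then interpret sigma_finite_subalgebra M F by (rule finite_measure_subalgebra_is_sigma_finite)
  have X1: "integrable M X"
  proof (rule Bochner_Integration.integrable_bound)
    show "integrable M (\<lambda>x. 1 + (X x)^2)" using X2 by auto
    show "X \<in> borel_measurable M" by measurable
    show "AE x in M. norm (X x) \<le> norm (1 + (X x)^2)"
    proof (rule AE_I2)
      fix x
      have "\<bar>X x\<bar> \<le> 1 + (X x)^2"
      proof (cases "\<bar>X x\<bar> \<le> 1")
        case True then show ?thesis by (simp add: add_increasing2)
      next
        case False
        then have "\<bar>X x\<bar> * 1 \<le> \<bar>X x\<bar> * \<bar>X x\<bar>" by (intro mult_left_mono) auto
        then show ?thesis by (simp add: power2_eq_square abs_mult_self)
      qed
      then show "norm (X x) \<le> norm (1 + (X x)^2)" by simp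
    qed
  qed
  have q: "integrable M (\<lambda>x. power2 (X x))" "convex_on UNIV power2" "power2 \<in> borel_measurable (borel::real measure)"
    using X2 convex_power2 by auto
  have cei: "integrable M (\<lambda>x. (real_cond_exp M F X x)^2)"
    using integrable_convex_cond_exp[where I=UNIV, OF X1 _ _ q] by auto
  then show "integrable M (\<lambda>x. (real_cond_exp M F X x)^2)" .
  have J: "AE x in M. (real_cond_exp M F X x)^2 \<le> real_cond_exp M F (\<lambda>x. (X x)^2) x"
    using real_cond_exp_jensens_inequality(2)[where I=UNIV, OF X1 _ _ q] by auto
  have "integral\<^sup>L M (\<lambda>x. (real_cond_exp M F X x)^2) \<le> integral\<^sup>L M (real_cond_exp M F (\<lambda>x. (X x)^2))"
    using J cei real_cond_exp_int(1)[OF X2] by (intro integral_mono_AE) auto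
  also have "\<dots> = integral\<^sup>L M (\<lambda>x. (X x)^2)" using real_cond_exp_int(2)[OF X2] .
  finally show ce2: "integral\<^sup>L M (\<lambda>x. (real_cond_exp M F X x)^2) \<le> integral\<^sup>L M (\<lambda>x. (X x)^2)" .
  show "integral\<^sup>L M (\<lambda>x. Y x * (X x - real_cond_exp M F X x)) = 0"
    if YF[measurable]: "Y \<in> borel_measurable F" and Y2: "integrable M (\<lambda>x. (Y x)^2)" for Y
  proof -
    have YM[measurable]: "Y \<in> borel_measurable M" using measurable_from_subalg[OF sub YF] .
    have iYX: "integrable M (\<lambda>x. Y x * X x)" using L2_prod_integrable[OF YM _ Y2 X2] by simp
    have c: "integrable M (\<lambda>x. Y x * real_cond_exp M F X x)"
      "integral\<^sup>L M (\<lambda>x. Y x * real_cond_exp M F X x) = integral\<^sup>L M (\<lambda>x. Y x * X x)"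
      using real_cond_exp_intg[OF iYX YF] by auto
    have "integral\<^sup>L M (\<lambda>x. Y x * (X x - real_cond_exp M F X x)) =
        integral\<^sup>L M (\<lambda>x. Y x * X x - Y x * real_cond_exp M F X x)"
      by (simp add: right_diff_distrib)
    also have "\<dots> = 0" using iYX c by simp
    finally show ?thesis .
  qed
  have m2: "(\<lambda>x. - real_cond_exp M F X x) \<in> borel_measurable M" by measurable
  have i2: "integrable M (\<lambda>x. (X x + - real_cond_exp M F X x)^2)"
    by (rule L2_add) (use cei X2 in auto)
  then show i2': "integrable M (\<lambda>x. (X x - real_cond_exp M F X x)^2)" by simp
  have "integral\<^sup>L M (\<lambda>x. (X x - real_cond_exp M F X x)^2)
     \<le> integral\<^sup>L M (\<lambda>x. 2 * (X x)^2 + 2 * (real_cond_exp M F X x)^2)"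
  proof (intro integral_mono i2')
    show "integrable M (\<lambda>x. 2 * (X x)^2 + 2 * (real_cond_exp M F X x)^2)" using X2 cei by auto
    fix x
    show "(X x - real_cond_exp M F X x)^2 \<le> 2 * (X x)^2 + 2 * (real_cond_exp M F X x)^2"
      using sum_squares_bound[of "X x" "- real_cond_exp M F X x"]
      by (simp add: power2_diff)
  qed
  also have "\<dots> = 2 * integral\<^sup>L M (\<lambda>x. (X x)^2) + 2 * integral\<^sup>L M (\<lambda>x. (real_cond_exp M F X x)^2)"
    using X2 cei by simp
  also have "\<dots> \<le> 4 * integral\<^sup>L M (\<lambda>x. (X x)^2)" using ce2 by simp
  finally show "integral\<^sup>L M (\<lambda>x. (X x - real_cond_exp M F X x)^2) \<le> 4 * integral\<^sup>L M (\<lambda>x. (X x)^2)" .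
qed




lemma gaussian_sq_integrable:
  assumes "prob_space M" "gaussian_rv M X"
  shows "integrable M (\<lambda>x. (X x)^2)"
proof -
  interpret prob_space M by fact
  have meas[measurable]: "X \<in> borel_measurable M" using assms(2) unfolding gaussian_rv_def by auto
  from assms(2) consider c where "AE x in M. X x = c"
    | \<mu> \<sigma> where "\<sigma> > 0" "distributed M lborel X (normal_density \<mu> \<sigma>)"
    unfolding gaussian_rv_def by blast
  then show ?thesis
  proof cases
    case (1 c)
    have "integrable M (\<lambda>x. c^2)" by simp
    then show ?thesis by (rule integrable_cong_AE_imp) (use 1 in auto)
  next
    case (2 \<mu> \<sigma>)
    have i2: "integrable M (\<lambda>x. (X x - \<mu>)^2)"
      using distributed_integrable[OF 2(2), of "\<lambda>x. (x - \<mu>)^2"] integrable_normal_moment[where k=2 and \<mu>=\<mu>, OF 2(1)]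
      by simp
    have i1: "integrable M (\<lambda>x. (X x - \<mu>)^1)"
      using distributed_integrable[OF 2(2), of "\<lambda>x. (x - \<mu>)^1"] integrable_normal_moment[where k=1 and \<mu>=\<mu>, OF 2(1)]
      by simp
    have "integrable M (\<lambda>x. (X x - \<mu>)^2 + 2*\<mu>*(X x - \<mu>)^1 + \<mu>^2)"
      using i1 i2 by auto
    then show ?thesis by (rule back_subst[where P="integrable M"]) (auto simp: power2_eq_square algebra_simps)
  qed
qed


lemma fbm_facts:
  assumes P: "prob_space M" and fb: "is_fBm M H T B"
  shows fbm_meas: "\<And>t. t \<in> {0..T} \<Longrightarrow> B t \<in> borel_measurable M"
    and fbm_sq: "\<And>t. t \<in> {0..T} \<Longrightarrow> integrable M (\<lambda>x. (B t x)^2)"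
    and fbm_incr: "\<And>s t. s \<in> {0..T} \<Longrightarrow> t \<in> {0..T} \<Longrightarrow>
        integral\<^sup>L M (\<lambda>x. (B t x - B s x)^2) = \<bar>t - s\<bar> powr (2*H)"
    and fbm_zero: "0 \<le> T \<Longrightarrow> AE x in M. B 0 x = 0"
proof -
  interpret prob_space M by (rule P)
  have g: "gaussian_rv M (B t)" if "t \<in> {0..T}" for t
  proof -
    have "\<forall>I c. finite I \<longrightarrow> I \<subseteq> {0..T} \<longrightarrow> gaussian_rv M (\<lambda>\<omega>. \<Sum>t\<in>I. c t * B t \<omega>)"
      using fb unfolding is_fBm_def by (elim conjE)
    then have "gaussian_rv M (\<lambda>\<omega>. \<Sum>u\<in>{t}. (\<lambda>_. 1) u * B u \<omega>)"
      using that by (elim allE[where x="{t}"] allE[where x="\<lambda>_. 1"]) simp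
    then show ?thesis by simp
  qed
  show bm: "B t \<in> borel_measurable M" if "t \<in> {0..T}" for t
    using g[OF that] unfolding gaussian_rv_def by auto
  show sq: "integrable M (\<lambda>x. (B t x)^2)" if "t \<in> {0..T}" for t
    using gaussian_sq_integrable[OF P g[OF that]] .
  have cov: "integral\<^sup>L M (\<lambda>x. B t x * B s x) = (t powr (2*H) + s powr (2*H) - \<bar>t - s\<bar> powr (2*H)) / 2"
    if "t \<in> {0..T}" "s \<in> {0..T}" for s t
  proof -
    have "\<forall>t\<in>{0..T}. \<forall>s\<in>{0..T}. integral\<^sup>L M (\<lambda>\<omega>. B t \<omega> * B s \<omega>) =
        (t powr (2*H) + s powr (2*H) - \<bar>t - s\<bar> powr (2*H)) / 2"
      using fb unfolding is_fBm_def by (elim conjE)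
    then show ?thesis using that by simp
  qed
  show "integral\<^sup>L M (\<lambda>x. (B t x - B s x)^2) = \<bar>t - s\<bar> powr (2*H)"
    if s: "s \<in> {0..T}" and t: "t \<in> {0..T}" for s t
  proof -
    have ts: "integrable M (\<lambda>x. B t x * B s x)"
      using L2_prod_integrable[OF bm[OF t] bm[OF s] sq[OF t] sq[OF s]] .
    have tt: "integrable M (\<lambda>x. B t x * B t x)" using sq[OF t] by (simp add: power2_eq_square)
    have ss: "integrable M (\<lambda>x. B s x * B s x)" using sq[OF s] by (simp add: power2_eq_square)
    have e: "(B t x - B s x)^2 = B t x * B t x - 2 * (B t x * B s x) + B s x * B s x" for x
      by (simp add: power2_eq_square algebra_simps)
    have "integral\<^sup>L M (\<lambda>x. (B t x - B s x)^2) =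
        integral\<^sup>L M (\<lambda>x. B t x * B t x) - 2 * integral\<^sup>L M (\<lambda>x. B t x * B s x) + integral\<^sup>L M (\<lambda>x. B s x * B s x)"
      unfolding e using ts tt ss by simp
    also have "\<dots> = \<bar>t - s\<bar> powr (2*H)"
      using cov[OF t t] cov[OF s s] cov[OF t s] by simp
    finally show ?thesis .
  qed
  show "AE x in M. B 0 x = 0" if "0 \<le> T"
  proof -
    have z: "0 \<in> {0..T}" using that by simp
    have "integral\<^sup>L M (\<lambda>x. (B 0 x)^2) = 0"
      using cov[OF z z] by (simp add: power2_eq_square)
    then have "AE x in M. (B 0 x)^2 = 0"
      using integral_nonneg_eq_0_iff_AE[OF sq[OF z]] by simp
    then show ?thesis by simp
  qed
qed




lemma partition_enum:
  assumes part: "is_partition T \<theta>" and T: "0 < T"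
  obtains m tt where "0 < m" "\<And>i j. i < j \<Longrightarrow> j \<le> m \<Longrightarrow> tt i < tt j" "\<theta> = tt ` {..m}"
    "tt 0 = 0" "tt m = T" "Max \<theta> = T"
    "\<And>j. j < m \<Longrightarrow> next_pt \<theta> (tt j) = tt (Suc j)"
    "\<And>j. j < m \<Longrightarrow> tt (Suc j) - tt j \<le> mesh \<theta>"
    "{a\<in>\<theta>. a < Max \<theta>} = tt ` {..<m}"
proof -
  have fin: "finite \<theta>" and sub: "\<theta> \<subseteq> {0..T}" and z: "0 \<in> \<theta>" and TT: "T \<in> \<theta>"
    using part unfolding is_partition_def by auto
  obtain xs where xs: "sorted_wrt (<) xs" "set xs = \<theta>"
    using ex1_sorted_list_for_set_if_finite[OF fin] by blast
  define m where "m = length xs - 1"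
  define tt where "tt i = xs ! i" for i
  have "card {0, T} \<le> card \<theta>" using fin z TT by (intro card_mono) auto
  also have "\<dots> \<le> length xs" using xs(2) card_length by blast
  finally have len: "2 \<le> length xs" using T by simp
  then have m0: "0 < m" and lm: "length xs = Suc m" unfolding m_def by auto
  have strict: "tt i < tt j" if "i < j" "j \<le> m" for i j
    unfolding tt_def using sorted_wrt_nth_less[OF xs(1) that(1)] that lm by simp
  have mono: "tt i \<le> tt j" if "i \<le> j" "j \<le> m" for i j
    using strict[of i j] that by (cases "i = j") auto
  have img: "\<theta> = tt ` {..m}"
    unfolding xs(2)[symmetric] tt_def set_conv_nth lm by (auto simp: less_Suc_eq_le)
  have inT: "0 \<le> tt i \<and> tt i \<le> T" if "i \<le> m" for i using sub img that by auto
  have t0: "tt 0 = 0"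
  proof -
    obtain i where i: "i \<le> m" "tt i = 0" using z img by auto
    show ?thesis using mono[of 0 i] i inT[of 0] by auto
  qed
  have tm: "tt m = T"
  proof -
    obtain i where i: "i \<le> m" "tt i = T" using TT img by auto
    show ?thesis using mono[of i m] i inT[of m] by auto
  qed
  have Mx: "Max \<theta> = T"
    by (rule Max_eqI) (use fin sub TT in auto)
  have nx: "next_pt \<theta> (tt j) = tt (Suc j)" if j: "j < m" for j
    unfolding next_pt_def
  proof (rule Min_eqI)
    show "finite {b \<in> \<theta>. tt j < b}" using fin by auto
    show "tt (Suc j) \<in> {b \<in> \<theta>. tt j < b}" using img strict[of j "Suc j"] j by auto
    fix y assume "y \<in> {b \<in> \<theta>. tt j < b}"
    then obtain i where i: "i \<le> m" "y = tt i" "tt j < tt i" using img by auto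
    have "\<not> i \<le> j" using mono[of i j] i j by auto
    then show "tt (Suc j) \<le> y" using mono[of "Suc j" i] i by auto
  qed
  have lt: "{a\<in>\<theta>. a < Max \<theta>} = tt ` {..<m}"
  proof
    show "{a\<in>\<theta>. a < Max \<theta>} \<subseteq> tt ` {..<m}"
    proof
      fix a assume "a \<in> {a\<in>\<theta>. a < Max \<theta>}"
      then obtain i where "i \<le> m" "a = tt i" "tt i < T" using img Mx by auto
      then show "a \<in> tt ` {..<m}" using tm by (cases "i = m") auto
    qed
    show "tt ` {..<m} \<subseteq> {a\<in>\<theta>. a < Max \<theta>}"
    proof
      fix a assume "a \<in> tt ` {..<m}"
      then obtain i where "i < m" "a = tt i" by auto
      then show "a \<in> {a\<in>\<theta>. a < Max \<theta>}" using img strict[of i m] unfolding Mx tm[symmetric] by auto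
    qed
  qed
  have ms: "tt (Suc j) - tt j \<le> mesh \<theta>" if j: "j < m" for j
  proof -
    have "tt j \<in> {a\<in>\<theta>. a < Max \<theta>}" using lt j by auto
    then have "next_pt \<theta> (tt j) - tt j \<in> (\<lambda>a. next_pt \<theta> a - a) ` {a\<in>\<theta>. a < Max \<theta>}" by auto
    then show ?thesis unfolding mesh_def nx[OF j, symmetric] using fin by (intro Max_ge) auto
  qed
  show ?thesis using that[OF m0 strict img t0 tm Mx nx ms lt] .
qed

lemma comp_index:
  assumes strict: "\<And>i j. i < j \<Longrightarrow> j \<le> m \<Longrightarrow> tt i < tt j"
    and nx: "\<And>j. j < m \<Longrightarrow> next_pt \<theta> (tt j) = tt (Suc j)"
    and lt: "{a\<in>\<theta>. a < Max \<theta>} = tt ` {..<m}"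
  shows "compensator M F X \<theta> s \<omega> =
    (\<Sum>j\<in>{j. j < m \<and> tt (Suc j) \<le> s}. real_cond_exp M (F (tt j)) (\<lambda>\<omega>. X (tt (Suc j)) \<omega> - X (tt j) \<omega>) \<omega>)"
proof -
  have set: "{a \<in> \<theta>. a < Max \<theta> \<and> next_pt \<theta> a \<le> s} = tt ` {j. j < m \<and> tt (Suc j) \<le> s}"
  proof -
    have "{a \<in> \<theta>. a < Max \<theta> \<and> next_pt \<theta> a \<le> s} = {a \<in> {a\<in>\<theta>. a < Max \<theta>}. next_pt \<theta> a \<le> s}" by auto
    also have "\<dots> = {a \<in> tt ` {..<m}. next_pt \<theta> a \<le> s}" using lt by simp
    also have "\<dots> = tt ` {j. j < m \<and> tt (Suc j) \<le> s}" using nx by auto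
    finally show ?thesis .
  qed
  have inj: "inj_on tt {j. j < m \<and> tt (Suc j) \<le> s}"
  proof (rule inj_onI)
    fix i j assume "i \<in> {j. j < m \<and> tt (Suc j) \<le> s}" "j \<in> {j. j < m \<and> tt (Suc j) \<le> s}" "tt i = tt j"
    then show "i = j" using strict[of i j] strict[of j i] by (cases i j rule: linorder_cases) auto
  qed
  have "compensator M F X \<theta> s \<omega> = (\<Sum>j\<in>{j. j < m \<and> tt (Suc j) \<le> s}.
      real_cond_exp M (F (tt j)) (\<lambda>\<omega>. X (next_pt \<theta> (tt j)) \<omega> - X (tt j) \<omega>) \<omega>)"
    unfolding compensator_def set using sum.reindex[OF inj] by simp
  also have "\<dots> = (\<Sum>j\<in>{j. j < m \<and> tt (Suc j) \<le> s}.
      real_cond_exp M (F (tt j)) (\<lambda>\<omega>. X (tt (Suc j)) \<omega> - X (tt j) \<omega>) \<omega>)"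
    by (rule sum.cong) (auto simp: nx)
  finally show ?thesis .
qed

lemma position:
  fixes tt :: "nat \<Rightarrow> real" and s T h :: real
  assumes s: "0 \<le> s" "s \<le> T" and m0: "0 < m"
    and strict: "\<And>i j. i < j \<Longrightarrow> j \<le> m \<Longrightarrow> tt i < tt j"
    and t0: "tt 0 = 0" and tm: "tt m = T"
    and ms: "\<And>j. j < m \<Longrightarrow> tt (Suc j) - tt j \<le> h"
  shows "\<exists>k\<le>m. tt k \<le> s \<and> s - tt k \<le> h \<and> {j. j < m \<and> tt (Suc j) \<le> s} = {..<k}"
proof -
  have mono: "tt i \<le> tt j" if "i \<le> j" "j \<le> m" for i j
    using strict[of i j] that by (cases "i = j") auto
  define K where "K = {j. j \<le> m \<and> tt j \<le> s}"
  define k where "k = Max K"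
  have fK: "finite K" unfolding K_def by auto
  have "0 \<in> K" unfolding K_def using t0 s by auto
  then have kK: "k \<in> K" unfolding k_def using fK by (intro Max_in) auto
  have kmax: "j \<le> k" if "j \<in> K" for j unfolding k_def using fK that by (intro Max_ge) auto
  have km: "k \<le> m" and tk: "tt k \<le> s" using kK unfolding K_def by auto
  have h0: "0 \<le> h" using ms[OF m0] strict[of 0 1] m0 by force
  have "s - tt k \<le> h"
  proof (cases "k < m")
    case True
    have "Suc k \<notin> K" using kmax[of "Suc k"] by auto
    then have "s < tt (Suc k)" unfolding K_def using True by auto
    then show ?thesis using ms[OF True] by linarith
  next
    case False
    then have "k = m" using km by auto
    then show ?thesis using tm s h0 by simp
  qed
  moreover have "{j. j < m \<and> tt (Suc j) \<le> s} = {..<k}"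
  proof (intro set_eqI iffI)
    fix j assume "j \<in> {j. j < m \<and> tt (Suc j) \<le> s}"
    then have "Suc j \<in> K" unfolding K_def by auto
    then show "j \<in> {..<k}" using kmax by fastforce
  next
    fix j assume "j \<in> {..<k}"
    then have "j < m" "Suc j \<le> k" using km by auto
    then show "j \<in> {j. j < m \<and> tt (Suc j) \<le> s}" using mono[of "Suc j" k] km tk by auto
  qed
  ultimately show ?thesis using km tk by blast
qed




lemma cont_part:
  fixes B :: "real \<Rightarrow> 'a \<Rightarrow> real" and d :: "nat \<Rightarrow> real"
  assumes P: "prob_space M" and Bm: "\<And>t. t \<in> {0..T} \<Longrightarrow> B t \<in> borel_measurable M"
    and cont: "\<forall>\<omega>\<in>space M. continuous_on {0..T} (\<lambda>t. B t \<omega>)"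
    and dT: "\<And>i. d i \<in> {0..T}"
    and dense: "\<And>t e. t \<in> {0..T} \<Longrightarrow> 0 < e \<Longrightarrow> \<exists>i. \<bar>d i - t\<bar> < e"
    and eps: "0 < \<epsilon>" and del: "0 < \<delta>"
  shows "\<exists>h>0. \<exists>E\<in>sets M. measure M E < \<delta> \<and>
     (\<forall>\<omega>\<in>space M - E. \<forall>s\<in>{0..T}. \<forall>t\<in>{0..T}. \<bar>s - t\<bar> < h \<longrightarrow> \<bar>B s \<omega> - B t \<omega>\<bar> \<le> \<epsilon>)"
proof -
  interpret prob_space M by (rule P)
  define G where "G N = {\<omega>\<in>space M. \<forall>i j. \<bar>d i - d j\<bar> < 1 / Suc N \<longrightarrow> \<bar>B (d i) \<omega> - B (d j) \<omega>\<bar> \<le> \<epsilon>}" for N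
  have [measurable]: "B (d i) \<in> borel_measurable M" for i using Bm dT by auto
  have GM: "G N \<in> sets M" for N unfolding G_def by measurable
  have inc: "incseq G"
  proof (rule incseq_SucI)
    fix N
    have "1 / real (Suc (Suc N)) \<le> 1 / Suc N" by (intro divide_left_mono) auto
    then show "G N \<subseteq> G (Suc N)" unfolding G_def by force
  qed
  have U: "(\<Union>N. G N) = space M"
  proof
    show "(\<Union>N. G N) \<subseteq> space M" unfolding G_def by auto
    show "space M \<subseteq> (\<Union>N. G N)"
    proof
      fix \<omega> assume w: "\<omega> \<in> space M"
      have "uniformly_continuous_on {0..T} (\<lambda>t. B t \<omega>)"
        using cont w by (intro compact_uniformly_continuous) auto
      then obtain \<gamma> where g: "\<gamma> > 0" "\<And>x x'. x \<in> {0..T} \<Longrightarrow> x' \<in> {0..T} \<Longrightarrow> dist x' x < \<gamma> \<Longrightarrow>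
           dist (B x' \<omega>) (B x \<omega>) < \<epsilon>"
        unfolding uniformly_continuous_on_def using eps by metis
      obtain n where n: "n > 0" "inverse (real n) < \<gamma>" using ex_inverse_of_nat_less[OF g(1)] by blast
      define N where "N = n - 1"
      have N: "inverse (real (Suc N)) < \<gamma>" using n unfolding N_def by simp
      have "\<omega> \<in> G N" unfolding G_def
      proof (intro CollectI conjI allI impI w)
        fix i j assume "\<bar>d i - d j\<bar> < 1 / Suc N"
        then have "dist (d i) (d j) < \<gamma>" using N unfolding inverse_eq_divide dist_real_def by linarith
        then show "\<bar>B (d i) \<omega> - B (d j) \<omega>\<bar> \<le> \<epsilon>" using g(2)[of "d j" "d i"] dT by (simp add: dist_real_def)
      qed
      then show "\<omega> \<in> (\<Union>N. G N)" by auto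
    qed
  qed
  have "(\<lambda>N. measure M (G N)) \<longlonglongrightarrow> measure M (\<Union>N. G N)"
    using GM inc by (intro Lim_measure_incseq) auto
  then have "(\<lambda>N. measure M (G N)) \<longlonglongrightarrow> 1" using U prob_space by simp
  then have "\<forall>\<^sub>F N in sequentially. 1 - \<delta> < measure M (G N)"
    using del by (intro order_tendstoD) auto
  then obtain N where N: "1 - \<delta> < measure M (G N)" by (meson eventually_sequentially order.refl)
  define E where "E = space M - G N"
  have EM: "E \<in> sets M" unfolding E_def using GM by auto
  have "measure M E = 1 - measure M (G N)" unfolding E_def using GM prob_compl by simp
  then have Em: "measure M E < \<delta>" using N by simp
  have main: "\<bar>B s \<omega> - B t \<omega>\<bar> \<le> \<epsilon>"
    if w: "\<omega> \<in> G N" and s: "s \<in> {0..T}" and t: "t \<in> {0..T}" and st: "\<bar>s - t\<bar> < 1 / Suc N" for \<omega> s t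
  proof (rule field_le_epsilon)
    fix \<eta> :: real assume eta: "0 < \<eta>"
    have ws: "\<omega> \<in> space M" using w unfolding G_def by auto
    have c: "continuous_on {0..T} (\<lambda>t. B t \<omega>)" using cont ws by auto
    obtain g1 where g1: "g1 > 0" "\<And>x'. x' \<in> {0..T} \<Longrightarrow> dist x' s < g1 \<Longrightarrow> dist (B x' \<omega>) (B s \<omega>) < \<eta>/2"
      using c s eta unfolding continuous_on_iff by (metis half_gt_zero)
    obtain g2 where g2: "g2 > 0" "\<And>x'. x' \<in> {0..T} \<Longrightarrow> dist x' t < g2 \<Longrightarrow> dist (B x' \<omega>) (B t \<omega>) < \<eta>/2"
      using c t eta unfolding continuous_on_iff by (metis half_gt_zero)
    define r where "r = (1 / Suc N - \<bar>s - t\<bar>) / 2"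
    have r: "r > 0" using st unfolding r_def by simp
    obtain i where i: "\<bar>d i - s\<bar> < min g1 r" using dense[OF s] g1(1) r by (metis min_less_iff_conj)
    obtain j where j: "\<bar>d j - t\<bar> < min g2 r" using dense[OF t] g2(1) r by (metis min_less_iff_conj)
    have "\<bar>d i - s\<bar> < r" "\<bar>d j - t\<bar> < r" using i j by auto
    moreover have "2 * r + \<bar>s - t\<bar> = 1 / Suc N" unfolding r_def by (simp add: field_simps)
    ultimately have "\<bar>d i - d j\<bar> < 1 / Suc N" using abs_ge_self[of "s - t"] abs_ge_minus_self[of "s - t"] unfolding abs_less_iff by (elim conjE; intro conjI; linarith)
    then have "\<bar>B (d i) \<omega> - B (d j) \<omega>\<bar> \<le> \<epsilon>" using w unfolding G_def by auto
    moreover have "\<bar>B (d i) \<omega> - B s \<omega>\<bar> < \<eta>/2" using g1(2)[of "d i"] dT i by (simp add: dist_real_def)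
    moreover have "\<bar>B (d j) \<omega> - B t \<omega>\<bar> < \<eta>/2" using g2(2)[of "d j"] dT j by (simp add: dist_real_def)
    ultimately show "\<bar>B s \<omega> - B t \<omega>\<bar> \<le> \<epsilon> + \<eta>" by linarith
  qed
  show ?thesis
  proof (intro exI conjI bexI ballI impI)
    show "0 < 1 / real (Suc N)" by simp
    show "E \<in> sets M" by (rule EM)
    show "measure M E < \<delta>" by (rule Em)
    fix \<omega> s t assume "\<omega> \<in> space M - E" "s \<in> {0..T}" "t \<in> {0..T}" "\<bar>s - t\<bar> < 1 / real (Suc N)"
    then show "\<bar>B s \<omega> - B t \<omega>\<bar> \<le> \<epsilon>" using main[of \<omega> s t] unfolding E_def by auto
  qed
qed




theorem theorem2p1:
  fixes M :: "'a measure" and F :: "real \<Rightarrow> 'a measure"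
    and B :: "real \<Rightarrow> 'a \<Rightarrow> real" and H T :: real and \<theta> :: "nat \<Rightarrow> real set"
  assumes "prob_space M"
    and "1/2 < H" and "H < 1" and "T > 0"
    and "usual_filtration M T F"
    and "is_fBm M H T B"
    and "\<forall>t\<in>{0..T}. B t \<in> borel_measurable (F t)"
    and "normally_condensing T \<theta>"
  shows "\<forall>\<epsilon>>0. \<forall>\<delta>>0. \<exists>N. \<forall>n\<ge>N. \<exists>E\<in>sets M. measure M E < \<delta> \<and>
           {\<omega>\<in>space M. (SUP t\<in>{0..T}. \<bar>B t \<omega> - compensator M F B (\<theta> n) t \<omega>\<bar>) > \<epsilon>} \<subseteq> E"
proof (intro allI impI)
  fix \<epsilon> \<delta> :: real assume eps: "0 < \<epsilon>" and del: "0 < \<delta>"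
  note P = assms(1)
  interpret prob_space M by (rule P)
  have H1: "1/2 < H" "H < 1" and T: "0 < T" using assms by auto
  have sub: "\<And>t. t \<in> {0..T} \<Longrightarrow> subalgebra M (F t)"
    and fmono: "\<And>s t. 0 \<le> s \<Longrightarrow> s \<le> t \<Longrightarrow> t \<le> T \<Longrightarrow> sets (F s) \<subseteq> sets (F t)"
    using assms(5) unfolding usual_filtration_def by auto
  have fb: "is_fBm M H T B" by fact
  have cont: "\<forall>\<omega>\<in>space M. continuous_on {0..T} (\<lambda>t. B t \<omega>)" using fb unfolding is_fBm_def by auto
  have adapt: "\<And>t. t \<in> {0..T} \<Longrightarrow> B t \<in> borel_measurable (F t)" using assms(7) by auto
  have part: "\<And>n. is_partition T (\<theta> n)" and meshlim: "(\<lambda>n. mesh (\<theta> n)) \<longlonglongrightarrow> 0"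
    using assms(8) unfolding normally_condensing_def by auto
  have lift: "f \<in> borel_measurable (F t)" if "f \<in> borel_measurable (F s)" "0 \<le> s" "s \<le> t" "t \<le> T" for f s t
  proof -
    have "subalgebra (F t) (F s)" unfolding subalgebra_def
      using sub[of s] sub[of t] that fmono[of s t] unfolding subalgebra_def by auto
    then show ?thesis using measurable_from_subalg that(1) by blast
  qed
  define DD where "DD = (\<Union>n. \<theta> n)"
  have DDc: "countable DD" unfolding DD_def
  proof (rule countable_UN)
    show "countable (UNIV :: nat set)" by simp
    fix n show "countable (\<theta> n)" using part[of n] unfolding is_partition_def by (intro countable_finite) auto
  qed
  have DDT: "DD \<subseteq> {0..T}" unfolding DD_def using part unfolding is_partition_def by auto
  have DDne: "DD \<noteq> {}" unfolding DD_def using part[of 0] unfolding is_partition_def by auto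
  define d where "d = from_nat_into DD"
  have drange: "range d = DD" unfolding d_def using DDne DDc by simp
  have dT: "\<And>i. d i \<in> {0..T}" using drange DDT rangeI[of d] by blast
  have dense: "\<exists>i. \<bar>d i - t\<bar> < e" if t: "t \<in> {0..T}" and e: "0 < e" for t e
  proof -
    have "\<forall>\<^sub>F n in sequentially. mesh (\<theta> n) < e" using order_tendstoD(2)[OF meshlim e] .
    then obtain n0 where "\<forall>n\<ge>n0. mesh (\<theta> n) < e" unfolding eventually_sequentially by auto
    then obtain n where n: "mesh (\<theta> n) < e" by auto
    obtain m tt where tt: "0 < m" "\<And>i j. i < j \<Longrightarrow> j \<le> m \<Longrightarrow> tt i < tt j" "\<theta> n = tt ` {..m}"
      "tt 0 = 0" "tt m = T" "Max (\<theta> n) = T" "\<And>j. j < m \<Longrightarrow> next_pt (\<theta> n) (tt j) = tt (Suc j)"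
      "\<And>j. j < m \<Longrightarrow> tt (Suc j) - tt j \<le> mesh (\<theta> n)" "{a\<in>\<theta> n. a < Max (\<theta> n)} = tt ` {..<m}"
      by (rule partition_enum[OF part[of n] T], rule that)
    obtain k where k: "k \<le> m" "tt k \<le> t" "t - tt k \<le> mesh (\<theta> n)"
      using position[of t T m tt "mesh (\<theta> n)"] t tt(1,2,4,5,8) by auto
    have "tt k \<in> DD" unfolding DD_def using tt(3) k(1) by auto
    then obtain i where di: "d i = tt k" using drange by auto
    have "\<bar>d i - t\<bar> = t - tt k" using di k(2) by simp
    then have "\<bar>d i - t\<bar> < e" using k(3) n by linarith
    then show ?thesis by blast
  qed
  obtain h E1 where h: "0 < h" and E1: "E1 \<in> sets M" "measure M E1 < \<delta>/2"
    and E1c: "\<And>\<omega> s t. \<omega> \<in> space M - E1 \<Longrightarrow> s \<in> {0..T} \<Longrightarrow> t \<in> {0..T} \<Longrightarrow> \<bar>s - t\<bar> < h \<Longrightarrow>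
       \<bar>B s \<omega> - B t \<omega>\<bar> \<le> \<epsilon>/3"
    using cont_part[OF P fbm_meas[OF P fb] cont dT dense, of "\<epsilon>/3" "\<delta>/2"] eps del by auto
  obtain Z where Z: "{\<omega>\<in>space M. \<not> B 0 \<omega> = 0} \<subseteq> Z" "Z \<in> null_sets M"
  proof -
    have "AE x in M. B 0 x = 0" using fbm_zero[OF P fb] T by simp
    then obtain N where "{x \<in> space M. \<not> B 0 x = 0} \<subseteq> N" "emeasure M N = 0" "N \<in> sets M"
      by (rule AE_E)
    then show ?thesis using that by (auto simp: null_sets_def)
  qed
  have mesh0: "0 \<le> mesh (\<theta> n)" for n
  proof -
    obtain m tt where tt: "0 < m" "\<And>i j. i < j \<Longrightarrow> j \<le> m \<Longrightarrow> tt i < tt j" "\<theta> n = tt ` {..m}"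
      "tt 0 = 0" "tt m = T" "Max (\<theta> n) = T" "\<And>j. j < m \<Longrightarrow> next_pt (\<theta> n) (tt j) = tt (Suc j)"
      "\<And>j. j < m \<Longrightarrow> tt (Suc j) - tt j \<le> mesh (\<theta> n)" "{a\<in>\<theta> n. a < Max (\<theta> n)} = tt ` {..<m}"
      by (rule partition_enum[OF part[of n] T], rule that)
    have "tt 0 < tt 1" using tt(2)[of 0 1] tt(1) by simp
    then show ?thesis using tt(8)[of 0] tt(1) by simp
  qed
  have lim1: "(\<lambda>n. mesh (\<theta> n) powr (2*H - 1)) \<longlonglongrightarrow> 0"
    by (rule tendsto_zero_powrI[OF meshlim tendsto_const]) (use mesh0 H1 in auto)
  have lim2: "(\<lambda>n. 36 * T * mesh (\<theta> n) powr (2*H - 1) / \<epsilon>^2) \<longlonglongrightarrow> 0"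
    using tendsto_mult_right_zero[OF lim1, of "36 * T"] by (intro tendsto_divide_zero) (simp add: mult.assoc)
  have "\<forall>\<^sub>F n in sequentially. 36 * T * mesh (\<theta> n) powr (2*H - 1) / \<epsilon>^2 < \<delta>/2"
    using del by (intro order_tendstoD(2)[OF lim2]) simp
  moreover have "\<forall>\<^sub>F n in sequentially. mesh (\<theta> n) < h"
    using order_tendstoD(2)[OF meshlim h] .
  ultimately have "\<forall>\<^sub>F n in sequentially. 36 * T * mesh (\<theta> n) powr (2*H - 1) / \<epsilon>^2 < \<delta>/2 \<and> mesh (\<theta> n) < h"
    by (rule eventually_conj)
  then obtain N where N: "\<And>n. n \<ge> N \<Longrightarrow> 36 * T * mesh (\<theta> n) powr (2*H - 1) / \<epsilon>^2 < \<delta>/2 \<and> mesh (\<theta> n) < h"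
    unfolding eventually_sequentially by auto
  show "\<exists>N. \<forall>n\<ge>N. \<exists>E\<in>sets M. measure M E < \<delta> \<and>
           {\<omega>\<in>space M. (SUP t\<in>{0..T}. \<bar>B t \<omega> - compensator M F B (\<theta> n) t \<omega>\<bar>) > \<epsilon>} \<subseteq> E"
  proof (intro exI allI impI)
    fix n assume nN: "N \<le> n"
    note Nn = N[OF nN]
    obtain m tt where m0: "0 < m" and strict: "\<And>i j. i < j \<Longrightarrow> j \<le> m \<Longrightarrow> tt i < tt j"
      and img: "\<theta> n = tt ` {..m}" and t0: "tt 0 = 0" and tm: "tt m = T" and Mx: "Max (\<theta> n) = T"
      and nx: "\<And>j. j < m \<Longrightarrow> next_pt (\<theta> n) (tt j) = tt (Suc j)"
      and ms: "\<And>j. j < m \<Longrightarrow> tt (Suc j) - tt j \<le> mesh (\<theta> n)"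
      and lt: "{a\<in>\<theta> n. a < Max (\<theta> n)} = tt ` {..<m}"
      by (rule partition_enum[OF part[of n] T], rule that)
    have mono: "tt i \<le> tt j" if "i \<le> j" "j \<le> m" for i j
      using strict[of i j] that by (cases "i = j") auto
    have ttT: "tt i \<in> {0..T}" if "i \<le> m" for i using img part[of n] that unfolding is_partition_def by auto
    define X where "X j = (\<lambda>\<omega>. B (tt (Suc j)) \<omega> - B (tt j) \<omega>)" for j
    define CE where "CE j = real_cond_exp M (F (tt j)) (X j)" for j
    define D where "D j = (\<lambda>\<omega>. X j \<omega> - CE j \<omega>)" for j
    have XM[measurable]: "X j \<in> borel_measurable M" if "j < m" for j
      unfolding X_def using fbm_meas[OF P fb] ttT that by (intro borel_measurable_diff) auto
    have X2: "integrable M (\<lambda>\<omega>. (X j \<omega>)^2)" if j: "j < m" for j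
    proof -
      have a: "B (tt (Suc j)) \<in> borel_measurable M" "(\<lambda>\<omega>. - B (tt j) \<omega>) \<in> borel_measurable M"
        using fbm_meas[OF P fb] ttT j by auto
      have "integrable M (\<lambda>\<omega>. (B (tt (Suc j)) \<omega> + - B (tt j) \<omega>)^2)"
        by (rule L2_add[OF a]) (use fbm_sq[OF P fb] ttT j in auto)
      then show ?thesis unfolding X_def by simp
    qed
    have XF: "X j \<in> borel_measurable (F (tt j'))" if "j < m" "Suc j \<le> j'" "j' \<le> m" for j j'
    proof -
      have "B (tt (Suc j)) \<in> borel_measurable (F (tt j'))"
        using lift[OF adapt[OF ttT[of "Suc j"]]] ttT mono that by auto
      moreover have "B (tt j) \<in> borel_measurable (F (tt j'))"
        using lift[OF adapt[OF ttT[of "j"]]] ttT mono that by auto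
      ultimately show ?thesis unfolding X_def by (intro borel_measurable_diff)
    qed
    have CEF: "CE j \<in> borel_measurable (F (tt j'))" if "j \<le> j'" "j' \<le> m" for j j'
      unfolding CE_def using lift[OF borel_measurable_cond_exp] ttT mono that by auto
    have DM[measurable]: "D j \<in> borel_measurable M" if "j < m" for j
      unfolding D_def CE_def using XM that by (intro borel_measurable_diff borel_measurable_cond_exp2) auto
    have Dfacts: "integrable M (\<lambda>\<omega>. (D j \<omega>)^2)"
      "integral\<^sup>L M (\<lambda>\<omega>. (D j \<omega>)^2) \<le> 4 * integral\<^sup>L M (\<lambda>\<omega>. (X j \<omega>)^2)"
      "\<And>Y. Y \<in> borel_measurable (F (tt j)) \<Longrightarrow> integrable M (\<lambda>x. (Y x)^2) \<Longrightarrow>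
           integral\<^sup>L M (\<lambda>x. Y x * D j x) = 0"
      if j: "j < m" for j
      using ce_facts[OF P sub[OF ttT[of j]] XM[OF j] X2[OF j]] j unfolding D_def CE_def by auto
    define S where "S k \<omega> = (\<Sum>j<k. D j \<omega>)" for k \<omega>
    define K where "K = {\<omega>\<in>space M. \<exists>k\<le>m. \<epsilon>/3 < \<bar>S k \<omega>\<bar>}"
    have SM: "S k \<in> borel_measurable M" if "k \<le> m" for k
      unfolding S_def using that DM by (intro borel_measurable_sum) auto
    have KM: "K \<in> sets M"
    proof -
      have [measurable]: "S k \<in> borel_measurable M" if "k \<le> m" for k using SM that by auto
      show ?thesis unfolding K_def by measurable
    qed
    have Kbound: "measure M K \<le> (\<Sum>j<m. integral\<^sup>L M (\<lambda>x. (D j x)^2)) / (\<epsilon>/3)^2"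
      unfolding K_def S_def
    proof (rule kolmogorov_ineq[where G="\<lambda>j. F (tt j)"])
      show "prob_space M" by (rule P)
      show "0 < \<epsilon>/3" using eps by simp
      show "D j \<in> borel_measurable M" if "j < m" for j using DM that .
      show "integrable M (\<lambda>x. (D j x)^2)" if "j < m" for j using Dfacts(1) that .
      show "D i \<in> borel_measurable (F (tt j))" if "i < j" "j < m" for i j
        unfolding D_def using XF[of i j] CEF[of i j] that by (intro borel_measurable_diff) auto
      show "subalgebra M (F (tt j))" if "j < m" for j using sub ttT that by auto
      show "integral\<^sup>L M (\<lambda>x. Y x * D j x) = 0"
        if "j < m" "Y \<in> borel_measurable (F (tt j))" "integrable M (\<lambda>x. (Y x)^2)" for j Y
        using Dfacts(3) that by blast
    qed
    define p where "p = 2*H - 1"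
    have p0: "0 \<le> p" unfolding p_def using H1 by simp
    have Dj: "integral\<^sup>L M (\<lambda>x. (D j x)^2) \<le> 4 * (mesh (\<theta> n) powr p * (tt (Suc j) - tt j))"
      if j: "j < m" for j
    proof -
      define \<Delta> where "\<Delta> = tt (Suc j) - tt j"
      have d0: "0 \<le> \<Delta>" unfolding \<Delta>_def using strict[of j "Suc j"] j by auto
      have "integral\<^sup>L M (\<lambda>x. (X j x)^2) = \<bar>tt (Suc j) - tt j\<bar> powr (2*H)"
        unfolding X_def using fbm_incr[OF P fb] ttT j by auto
      also have "\<dots> = \<Delta> powr (p + 1)" unfolding \<Delta>_def p_def using d0 \<Delta>_def by simp
      also have "\<dots> = \<Delta> powr p * \<Delta>" using d0 by (simp add: powr_add)
      also have "\<dots> \<le> mesh (\<theta> n) powr p * \<Delta>"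
        using powr_mono2[OF p0, of \<Delta> "mesh (\<theta> n)"] ms[OF j] d0 unfolding \<Delta>_def
        by (intro mult_right_mono) auto
      finally show ?thesis using Dfacts(2)[OF j] unfolding \<Delta>_def by linarith
    qed
    have "(\<Sum>j<m. integral\<^sup>L M (\<lambda>x. (D j x)^2)) \<le> (\<Sum>j<m. 4 * (mesh (\<theta> n) powr p * (tt (Suc j) - tt j)))"
      using Dj by (intro sum_mono) auto
    also have "\<dots> = 4 * mesh (\<theta> n) powr p * (\<Sum>j<m. tt (Suc j) - tt j)"
      by (simp add: sum_distrib_left mult.assoc)
    also have "\<dots> = 4 * mesh (\<theta> n) powr p * T" using t0 tm by (simp add: sum_lessThan_telescope)
    finally have sumb: "(\<Sum>j<m. integral\<^sup>L M (\<lambda>x. (D j x)^2)) \<le> 4 * mesh (\<theta> n) powr p * T" .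
    have "measure M K \<le> 4 * mesh (\<theta> n) powr p * T / (\<epsilon>/3)^2"
      using Kbound sumb eps by (meson divide_right_mono order_trans zero_le_power2)
    also have "\<dots> = 36 * T * mesh (\<theta> n) powr (2*H - 1) / \<epsilon>^2"
      unfolding p_def by (simp add: power_divide field_simps)
    finally have Km: "measure M K < \<delta>/2" using Nn by linarith
    define E where "E = E1 \<union> Z \<union> K"
    have EM: "E \<in> sets M" unfolding E_def using E1 Z(2) KM by auto
    have "measure M E \<le> measure M (E1 \<union> Z) + measure M K"
      unfolding E_def using E1 Z(2) KM by (intro measure_Un_le) auto
    also have "\<dots> \<le> measure M E1 + measure M Z + measure M K"
      using E1 Z(2) measure_Un_le[of E1 M Z] null_setsD2[OF Z(2)] by simp
    also have "measure M Z = 0" using Z(2) by (simp add: null_sets_def emeasure_eq_measure)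
    finally have Em: "measure M E < \<delta>" using E1(2) Km by linarith
    have bound: "\<bar>B t \<omega> - compensator M F B (\<theta> n) t \<omega>\<bar> \<le> 2*\<epsilon>/3"
      if w: "\<omega> \<in> space M" "\<omega> \<notin> E" and t: "t \<in> {0..T}" for \<omega> t
    proof -
      obtain k where k: "k \<le> m" "tt k \<le> t" "t - tt k \<le> mesh (\<theta> n)"
        and kset: "{j. j < m \<and> tt (Suc j) \<le> t} = {..<k}"
        using position[of t T m tt "mesh (\<theta> n)"] t m0 strict t0 tm ms by auto
      have comp: "compensator M F B (\<theta> n) t \<omega> = (\<Sum>j<k. CE j \<omega>)"
        using comp_index[of m tt "\<theta> n" M F B t \<omega>, OF strict nx lt] kset unfolding CE_def X_def by simp
      have B0: "B 0 \<omega> = 0" using w Z(1) unfolding E_def by auto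
      have tel: "B (tt k) \<omega> = (\<Sum>j<k. X j \<omega>)"
        using sum_lessThan_telescope[of "\<lambda>j. B (tt j) \<omega>" k] B0 t0 unfolding X_def by simp
      have eq: "B t \<omega> - compensator M F B (\<theta> n) t \<omega> = (B t \<omega> - B (tt k) \<omega>) + S k \<omega>"
        unfolding comp tel S_def D_def by (simp add: sum_subtractf)
      have "\<bar>B t \<omega> - B (tt k) \<omega>\<bar> \<le> \<epsilon>/3"
        using E1c[of \<omega> t "tt k"] w t ttT[OF k(1)] k Nn unfolding E_def by auto
      moreover have "\<bar>S k \<omega>\<bar> \<le> \<epsilon>/3"
      proof -
        have "\<omega> \<notin> K" using w unfolding E_def by auto
        then have "\<not> (\<epsilon>/3 < \<bar>S k \<omega>\<bar>)" using w(1) k(1) unfolding K_def by blast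
        then show ?thesis by linarith
      qed
      ultimately show ?thesis unfolding eq by linarith
    qed
    show "\<exists>E\<in>sets M. measure M E < \<delta> \<and>
           {\<omega>\<in>space M. (SUP t\<in>{0..T}. \<bar>B t \<omega> - compensator M F B (\<theta> n) t \<omega>\<bar>) > \<epsilon>} \<subseteq> E"
    proof (intro bexI conjI subsetI)
      show "E \<in> sets M" by (rule EM)
      show "measure M E < \<delta>" by (rule Em)
      fix \<omega> assume "\<omega> \<in> {\<omega>\<in>space M. (SUP t\<in>{0..T}. \<bar>B t \<omega> - compensator M F B (\<theta> n) t \<omega>\<bar>) > \<epsilon>}"
      then have w: "\<omega> \<in> space M" and gt: "(SUP t\<in>{0..T}. \<bar>B t \<omega> - compensator M F B (\<theta> n) t \<omega>\<bar>) > \<epsilon>"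
        by auto
      show "\<omega> \<in> E"
      proof (rule ccontr)
        assume "\<omega> \<notin> E"
        then have "(SUP t\<in>{0..T}. \<bar>B t \<omega> - compensator M F B (\<theta> n) t \<omega>\<bar>) \<le> 2*\<epsilon>/3"
          using bound[OF w] T by (intro cSUP_least) auto
        then show False using gt eps by linarith
      qed
    qed
  qed
qed

end
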